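(* For every $k\ge1$, the set $G_k$ is a subgroup of $B_k$.
   Context: Let $C_2=\{e,\sigma\}$ with $\sigma=(1,2)$. Define $B_1=C_2$ and $B_k=B_{k-1}\wr C_2$ for $k>1$, with elements written as wreath recursions $(g_1,g_2)\pi$, $g_1,g_2\in B_{k-1}$, $\pi\in C_2$, and multiplication $(g_1,g_2)\pi\cdot(h_1,h_2)\rho=(g_1h_{\pi(1)},g_2h_{\pi(2)})\pi\rho$. Define $G_1=\{e\}$ and, for $k>1$, $G_k=\{(g_1,g_2)\pi\in B_k : g_1g_2\in G_{k-1}\}$. *)

theory Defs
  imports "HOL-Algebra.Group"
begin

text \<open>A permutation of C_2 = {e, sigma}
  is encoded by a boolean: False = e, True = sigma = (1,2).
  An element of B_1 = C_2 is  CLeaf p ; an element (g1,g2)pi of B_k (k > 1) is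
  WNode g1 g2 pi with g1, g2 in B_(k-1).\<close>

datatype wr = CLeaf bool | WNode wr wr bool

fun inB :: "nat \<Rightarrow> wr \<Rightarrow> bool" where
  "inB 0 g = False"
| "inB (Suc 0) g = (case g of CLeaf p \<Rightarrow> True | WNode _ _ _ \<Rightarrow> False)"
| "inB (Suc (Suc k)) g = (case g of CLeaf _ \<Rightarrow> False
      | WNode g1 g2 p \<Rightarrow> inB (Suc k) g1 \<and> inB (Suc k) g2)"

definition perm_app :: "bool \<Rightarrow> nat \<Rightarrow> nat" where
  "perm_app p i = (if p then (if i = 1 then 2 else 1) else i)"

text \<open>Multiplication: (g1,g2)pi * (h1,h2)rho = (g1 h_pi(1), g2 h_pi(2)) pi rho;
  in C_2, composition of permutations is xor of the booleans.\<close>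
fun wmult :: "wr \<Rightarrow> wr \<Rightarrow> wr" where
  "wmult (CLeaf p) (CLeaf q) = CLeaf (p \<noteq> q)"
| "wmult (WNode g1 g2 p) (WNode h1 h2 q) =
     WNode (wmult g1 (if perm_app p 1 = 1 then h1 else h2))
           (wmult g2 (if perm_app p 2 = 1 then h1 else h2))
           (p \<noteq> q)"
| "wmult _ _ = undefined"

fun wone :: "nat \<Rightarrow> wr" where
  "wone 0 = CLeaf False"
| "wone (Suc 0) = CLeaf False"
| "wone (Suc (Suc k)) = WNode (wone (Suc k)) (wone (Suc k)) False"

definition B :: "nat \<Rightarrow> wr monoid" where
  "B k = \<lparr> carrier = {g. inB k g}, mult = wmult, one = wone k \<rparr>"

fun Gset :: "nat \<Rightarrow> wr set" where
  "Gset 0 = {}"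
| "Gset (Suc 0) = {wone 1}"
| "Gset (Suc (Suc k)) = {g. inB (Suc (Suc k)) g \<and>
      (case g of WNode g1 g2 p \<Rightarrow> wmult g1 g2 \<in> Gset (Suc k) | CLeaf _ \<Rightarrow> False)}"

end

theory Submission
  imports Defs
begin

fun chi :: "wr \<Rightarrow> bool" where
  "chi (CLeaf p) = p"
| "chi (WNode g1 g2 p) = (chi g1 \<noteq> chi g2)"

fun winv :: "wr \<Rightarrow> wr" where
  "winv (CLeaf p) = CLeaf p"
| "winv (WNode g1 g2 p) = WNode (winv (if p then g2 else g1)) (winv (if p then g1 else g2)) p"

lemma pa1: "(perm_app p 1 = 1) = (\<not> p)" and pa2: "(perm_app p 2 = 1) = p"
  by (auto simp: perm_app_def)

lemma inB_Suc_Suc: "inB (Suc (Suc k)) g = (\<exists>g1 g2 p. g = WNode g1 g2 p \<and> inB (Suc k) g1 \<and> inB (Suc k) g2)"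
  by (cases g) auto

lemma inB_one: "inB (Suc 0) g = (\<exists>p. g = CLeaf p)"
  by (cases g) auto

lemma mult_closed: "inB k g \<Longrightarrow> inB k h \<Longrightarrow> inB k (wmult g h) \<and> chi (wmult g h) = (chi g \<noteq> chi h)"
proof (induction k arbitrary: g h)
  case 0 then show ?case by simp
next
  case (Suc k)
  show ?case
  proof (cases k)
    case 0 then show ?thesis using Suc.prems by (auto split: wr.splits)
  next
    case (Suc m)
    from Suc.prems obtain g1 g2 p h1 h2 q where "g = WNode g1 g2 p" "h = WNode h1 h2 q"
      "inB k g1" "inB k g2" "inB k h1" "inB k h2" using Suc by (auto split: wr.splits)
    then show ?thesis using Suc.IH Suc by (cases p; auto simp: perm_app_def)
  qed
qed

lemma assoc: "inB k g \<Longrightarrow> inB k h \<Longrightarrow> inB k f \<Longrightarrow> wmult (wmult g h) f = wmult g (wmult h f)"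
proof (induction k arbitrary: g h f)
  case 0 then show ?case by simp
next
  case (Suc k)
  show ?case
  proof (cases k)
    case 0 then show ?thesis using Suc.prems by (auto split: wr.splits)
  next
    case (Suc m)
    from Suc.prems obtain g1 g2 p h1 h2 q f1 f2 r where "g = WNode g1 g2 p" "h = WNode h1 h2 q"
      "f = WNode f1 f2 r"
      "inB k g1" "inB k g2" "inB k h1" "inB k h2" "inB k f1" "inB k f2" using Suc by (auto split: wr.splits)
    then show ?thesis using Suc.IH Suc mult_closed by (cases p; auto simp: perm_app_def)
  qed
qed

lemma one_props: "k \<ge> 1 \<Longrightarrow> inB k (wone k) \<and> chi (wone k) = False"
proof (induction k)
  case 0 then show ?case by simp
next
  case (Suc k) then show ?case by (cases k) auto
qed

lemma one_left: "inB k g \<Longrightarrow> wmult (wone k) g = g"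
proof (induction k arbitrary: g)
  case 0 then show ?case by simp
next
  case (Suc k)
  show ?case
  proof (cases k)
    case 0 then show ?thesis using Suc.prems by (auto split: wr.splits)
  next
    case (Suc m)
    from Suc.prems obtain g1 g2 p where "g = WNode g1 g2 p"
      "inB k g1" "inB k g2" using Suc by (auto split: wr.splits)
    then show ?thesis using Suc.IH Suc by (cases p; auto simp: perm_app_def)
  qed
qed

lemma inv_props: "inB k g \<Longrightarrow> inB k (winv g) \<and> wmult (winv g) g = wone k"
proof (induction k arbitrary: g)
  case 0 then show ?case by simp
next
  case (Suc k)
  show ?case
  proof (cases k)
    case 0 then show ?thesis using Suc.prems by (auto split: wr.splits)
  next
    case (Suc m)
    from Suc.prems obtain g1 g2 p where "g = WNode g1 g2 p"
      "inB k g1" "inB k g2" using Suc by (auto split: wr.splits)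
    then show ?thesis using Suc.IH Suc by (cases p; auto simp: perm_app_def)
  qed
qed

lemma Gset_char: "k \<ge> 1 \<Longrightarrow> Gset k = {g. inB k g \<and> \<not> chi g}"
proof (induction k)
  case 0 then show ?case by simp
next
  case (Suc k)
  show ?case
  proof (cases k)
    case 0 then show ?thesis by (auto split: wr.splits) (metis wr.exhaust)
  next
    case (Suc m)
    have "g \<in> Gset (Suc k) \<longleftrightarrow> inB (Suc k) g \<and> \<not> chi g" for g
    proof (cases "inB (Suc k) g")
      case True
      then obtain g1 g2 p where "g = WNode g1 g2 p"
        "inB k g1" "inB k g2" using Suc by (auto split: wr.splits)
      then show ?thesis using Suc.IH Suc mult_closed[of k g1 g2] by auto
    qed (use Suc in auto)
    then show ?thesis by auto
  qed
qed

lemma grp: "k \<ge> 1 \<Longrightarrow> group (B k)"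
proof (rule groupI)
  assume k: "k \<ge> 1"
  show "\<And>x y. x \<in> carrier (B k) \<Longrightarrow> y \<in> carrier (B k) \<Longrightarrow> x \<otimes>\<^bsub>B k\<^esub> y \<in> carrier (B k)"
    using mult_closed by (simp add: B_def)
  show "\<one>\<^bsub>B k\<^esub> \<in> carrier (B k)" using one_props[OF k] by (simp add: B_def)
  show "\<And>x y z. x \<in> carrier (B k) \<Longrightarrow> y \<in> carrier (B k) \<Longrightarrow> z \<in> carrier (B k) \<Longrightarrow>
     x \<otimes>\<^bsub>B k\<^esub> y \<otimes>\<^bsub>B k\<^esub> z = x \<otimes>\<^bsub>B k\<^esub> (y \<otimes>\<^bsub>B k\<^esub> z)"
    using assoc by (simp add: B_def)
  show "\<And>x. x \<in> carrier (B k) \<Longrightarrow> \<one>\<^bsub>B k\<^esub> \<otimes>\<^bsub>B k\<^esub> x = x"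
    using one_left by (simp add: B_def)
  show "\<And>x. x \<in> carrier (B k) \<Longrightarrow> \<exists>y\<in>carrier (B k). y \<otimes>\<^bsub>B k\<^esub> x = \<one>\<^bsub>B k\<^esub>"
    using inv_props by (fastforce simp add: B_def)
qed

theorem mainTheorem10:
  fixes k :: nat
  assumes "k \<ge> 1"
  shows "group (B k) \<and> subgroup (Gset k) (B k)"
proof
  show G: "group (B k)" using grp assms .
  interpret group "B k" by (rule G)
  have car: "carrier (B k) = {g. inB k g}" and mu: "\<And>x y. x \<otimes>\<^bsub>B k\<^esub> y = wmult x y"
    and on: "\<one>\<^bsub>B k\<^esub> = wone k" by (auto simp: B_def)
  show "subgroup (Gset k) (B k)"
  proof (rule subgroupI)
    show "Gset k \<subseteq> carrier (B k)" using Gset_char[OF assms] car by auto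
    show "Gset k \<noteq> {}" using Gset_char[OF assms] one_props[OF assms] by auto
  next
    fix a assume a: "a \<in> Gset k"
    hence ac: "a \<in> carrier (B k)" using Gset_char[OF assms] car by auto
    have ic: "inv\<^bsub>B k\<^esub> a \<in> carrier (B k)" using ac by simp
    have "inv\<^bsub>B k\<^esub> a \<otimes>\<^bsub>B k\<^esub> a = \<one>\<^bsub>B k\<^esub>" using ac by simp
    hence "chi (wmult (inv\<^bsub>B k\<^esub> a) a) = False" using on mu one_props[OF assms] by simp
    then show "inv\<^bsub>B k\<^esub> a \<in> Gset k" using mult_closed[of k "inv\<^bsub>B k\<^esub> a" a] ic ac a car
      Gset_char[OF assms] by auto
  next
    fix a b assume "a \<in> Gset k" "b \<in> Gset k"
    then show "a \<otimes>\<^bsub>B k\<^esub> b \<in> Gset k" using mult_closed[of k a b] Gset_char[OF assms] mu by auto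
  qed
qed

end
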